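(* Let $\tilde{\mathbf{G}}$ be a degree $n$ cover of $\mathbf{G}=\mathbf{GL}_r$ (split, over $S$) with first Brylinski–Deligne invariant $Q_{1,c}$, for an integer $c$. If $\gcd(n,1+r+2rc)=1$, then the dual group $\tilde G^\vee$ is isomorphic to $GL_r$. If $\gcd(n,r)=1$, then the derived subgroup of $\tilde G^\vee$ is isomorphic to $SL_r$, and thus there exists an isogeny $\tilde G^\vee\to GL_r$.
   Context: Let $\mathbf{T}\subset\mathbf{GL}_r$ be the diagonal torus with cocharacter lattice $Y=\mathbb{Z}^r$ (standard identification), Weyl group $S_r$ permuting coordinates, coroots $e_i-e_j$. For integers $q,c$, $Q_{q,c}$ is the unique Weyl-invariant quadratic form $Y\to\mathbb{Z}$ with $Q(1,-1,0,\dots,0)=q$ and $Q(1,0,\dots,0)=1+c$. Dual group of a degree $n$ cover with first invariant $Q$: set $\beta_Q(y_1,y_2)=n^{-1}(Q(y_1+y_2)-Q(y_1)-Q(y_2))$, $Y_{Q,n}=\{y\in Y:\beta_Q(y,y')\in\mathbb{Z}\ \forall y'\in Y\}$, $X_{Q,n}=\{x\in n^{-1}X:\langle x,y\rangle\in\mathbb{Z}\ \forall y\in Y_{Q,n}\}$ ($X$ the character lattice); for each root $\phi$ put $n_\phi=n/\gcd(n,Q(\phi^\vee))$, modified root $\tilde\phi=n_\phi^{-1}\phi$, modified coroot $\tilde\phi^\vee=n_\phi\phi^\vee$. The dual group $\tilde G^\vee$ is the split (pinned) reductive group over $\mathbb{Z}$ (here viewed via its complex points or as a group scheme) whose root datum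 has character lattice $Y_{Q,n}$, roots the modified coroots $\tilde\phi^\vee$, cocharacter lattice $X_{Q,n}$ and coroots the modified roots $\tilde\phi$. *)

theory Defs
  imports "HOL-Analysis.Analysis"
begin

text \<open>
  The torus T of GL_r is modelled with index type 'n, r = CARD('n).
  Character and cocharacter lattices X = Y = Z^r sit inside real^'n, and the
  perfect pairing is the dot product.  Characters of the dual group (which are
  elements of Y) and cocharacters of the dual group (elements of n^-1 X) are
  therefore all vectors in real^'n.
\<close>

definition Zlat :: "(real^'n) set" where
  "Zlat = {x. \<forall>i. x $ i \<in> \<int>}"

definition ev :: "'n::finite \<Rightarrow> real^'n" where
  "ev i = axis i 1"

text \<open>The unique Weyl-invariant quadratic form Q_{q,c}:
  Q(y) = (1+c) sum_i y_i^2 + (2+2c-q) sum_{i<j} y_i y_j,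
  where sum_{i<j} y_i y_j = ((sum_i y_i)^2 - sum_i y_i^2)/2.\<close>
definition Qf :: "int \<Rightarrow> int \<Rightarrow> real^'n \<Rightarrow> real" where
  "Qf q c y = real_of_int (1 + c) * (\<Sum>i\<in>UNIV. (y $ i)^2)
      + real_of_int (2 + 2*c - q) * (((\<Sum>i\<in>UNIV. y $ i)^2 - (\<Sum>i\<in>UNIV. (y $ i)^2)) / 2)"

definition betaQ :: "int \<Rightarrow> int \<Rightarrow> nat \<Rightarrow> real^'n \<Rightarrow> real^'n \<Rightarrow> real" where
  "betaQ q c n y1 y2 = (Qf q c (y1 + y2) - Qf q c y1 - Qf q c y2) / real n"

definition YQn :: "int \<Rightarrow> int \<Rightarrow> nat \<Rightarrow> (real^'n) set" where
  "YQn q c n = {y \<in> Zlat. \<forall>y'\<in>Zlat. betaQ q c n y y' \<in> \<int>}"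

definition XQn :: "int \<Rightarrow> int \<Rightarrow> nat \<Rightarrow> (real^'n) set" where
  "XQn q c n = {x. (\<forall>i. real n * x $ i \<in> \<int>) \<and> (\<forall>y\<in>YQn q c n. x \<bullet> y \<in> \<int>)}"

text \<open>Roots of GL_r: e_i - e_j (i ~= j), with coroot e_i - e_j.
  n_phi = n / gcd(n, Q(phi^vee)); Q(phi^vee) is an integer, taken via floor.\<close>
definition nphi :: "int \<Rightarrow> int \<Rightarrow> nat \<Rightarrow> 'n::finite \<Rightarrow> 'n \<Rightarrow> int" where
  "nphi q c n i j = int n div gcd (int n) \<lfloor>Qf q c (ev i - ev j :: real^'n)\<rfloor>"

text \<open>A root datum inside real^'n with dot-product pairing:
  (character lattice, cocharacter lattice, set of (root, coroot) pairs).\<close>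
type_synonym 'n rdatum = "(real^'n) set \<times> (real^'n) set \<times> ((real^'n) \<times> (real^'n)) set"

text \<open>Root datum of the dual group: characters Y_{Q,n}, roots the modified
  coroots n_phi phi^vee, cocharacters X_{Q,n}, coroots the modified roots phi/n_phi.\<close>
definition dual_datum :: "int \<Rightarrow> int \<Rightarrow> nat \<Rightarrow> ('n::finite) rdatum" where
  "dual_datum q c n = (YQn q c n, XQn q c n,
     {(real_of_int (nphi q c n i j) *\<^sub>R (ev i - ev j),
       (1 / real_of_int (nphi q c n i j)) *\<^sub>R (ev i - ev j)) | i j. i \<noteq> j})"

definition gl_datum :: "('n::finite) rdatum" where
  "gl_datum = (Zlat, Zlat, {(ev i - ev j, ev i - ev j) | i j. i \<noteq> j})"

text \<open>Root datum of the derived subgroup: cocharacters Y \<inter> span(coroots),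
  characters = restrictions of characters to span(coroots) (identified with
  vectors of that span via the dot product), same roots and coroots.\<close>
definition rd_derived :: "('n::finite) rdatum \<Rightarrow> 'n rdatum" where
  "rd_derived D = (case D of (X, Y, R) \<Rightarrow>
     (let V = span (snd ` R) in
       ({v \<in> V. \<exists>x\<in>X. \<forall>w\<in>V. v \<bullet> w = x \<bullet> w}, Y \<inter> V, R)))"

definition sl_datum :: "('n::finite) rdatum" where
  "sl_datum = rd_derived gl_datum"

definition rd_iso :: "('n::finite) rdatum \<Rightarrow> 'n rdatum \<Rightarrow> bool" where
  "rd_iso D D' = (case D of (X, Y, R) \<Rightarrow> case D' of (X', Y', R') \<Rightarrow>
     \<exists>f g. linear f \<and> linear g \<and> bij f \<and> bij g \<and> (\<forall>x y. f x \<bullet> g y = x \<bullet> y) \<and>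
       f ` X = X' \<and> g ` Y = Y' \<and> (\<lambda>(a, b). (f a, g b)) ` R = R')"

text \<open>(Central) isogeny G -> G' on root data: cocharacter map g: Y -> Y' injective
  with finite cokernel (g is a linear bijection of the ambient real space), dual
  character map X' -> X, matching roots and coroots.\<close>
definition rd_isogeny :: "('n::finite) rdatum \<Rightarrow> 'n rdatum \<Rightarrow> bool" where
  "rd_isogeny D D' = (case D of (X, Y, R) \<Rightarrow> case D' of (X', Y', R') \<Rightarrow>
     \<exists>f g. linear f \<and> linear g \<and> bij f \<and> bij g \<and> (\<forall>x y. f x \<bullet> g y = x \<bullet> y) \<and>
       X' \<subseteq> f ` X \<and> g ` Y \<subseteq> Y' \<and> (\<lambda>(a, b). (f a, g b)) ` R = R')"

end

theory Submission
  imports Defs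
begin

lemma ev_comp: "(ev i :: real^'n::finite) $ k = (if k = i then 1 else 0)"
  by (simp add: ev_def axis_def)

lemma sum_ev: "(\<Sum>k\<in>UNIV. (ev i :: real^'n::finite) $ k) = 1"
  by (simp add: ev_comp)

lemma sumsq_diff: assumes "i \<noteq> j"
  shows "(\<Sum>k\<in>UNIV. ((ev i - ev j :: real^'n::finite) $ k)^2) = 2"
proof -
  have "\<And>k. ((ev i - ev j :: real^'n) $ k)^2 = (if k = i then 1 else 0) + (if k = j then 1 else 0)"
    using assms by (auto simp: ev_comp)
  then show ?thesis by (simp add: sum.distrib)
qed

lemma Qf_root: assumes "i \<noteq> j" shows "Qf 1 c (ev i - ev j :: real^'n::finite) = 1"
proof -
  have s: "(\<Sum>k\<in>UNIV. (ev i - ev j :: real^'n) $ k) = 0"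
    by (simp add: sum_subtractf sum_ev)
  show ?thesis unfolding Qf_def using sumsq_diff[OF assms] s by simp
qed

lemma nphi_eq: "i \<noteq> j \<Longrightarrow> nphi 1 c n (i::'n::finite) j = int n"
  unfolding nphi_def using Qf_root[of i j c] by simp

lemma beta_eq: "betaQ 1 c n y y' = (y \<bullet> y' + of_int (1 + 2*c) * (\<Sum>i\<in>UNIV. y$i) * (\<Sum>i\<in>UNIV. y'$i)) / real n"
proof -
  have e1: "(\<Sum>i\<in>UNIV. ((y+y')$i)^2) = (\<Sum>i\<in>UNIV. (y$i)^2) + (\<Sum>i\<in>UNIV. (y'$i)^2) + 2 * (y \<bullet> y')"
    unfolding inner_vec_def by (simp add: power2_sum sum.distrib sum_distrib_left mult.assoc)
  have e2: "(\<Sum>i\<in>UNIV. (y+y')$i) = (\<Sum>i\<in>UNIV. y$i) + (\<Sum>i\<in>UNIV. y'$i)"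
    by (simp add: sum.distrib)
  have "Qf 1 c (y + y') - Qf 1 c y - Qf 1 c y' = y \<bullet> y' + of_int (1 + 2*c) * (\<Sum>i\<in>UNIV. y$i) * (\<Sum>i\<in>UNIV. y'$i)"
    unfolding Qf_def e1 e2 by (simp add: power2_sum field_simps)
  then show ?thesis unfolding betaQ_def by simp
qed


lemma Zlat_comp: "x \<in> Zlat \<Longrightarrow> x $ i \<in> \<int>"
  by (simp add: Zlat_def)

lemma Zlat_inner: "x \<in> Zlat \<Longrightarrow> y \<in> Zlat \<Longrightarrow> x \<bullet> y \<in> \<int>"
  unfolding inner_vec_def by (intro Ints_sum Ints_mult) (auto simp: Zlat_def)

lemma Zlat_sum: "x \<in> Zlat \<Longrightarrow> (\<Sum>i\<in>UNIV. x $ i) \<in> \<int>"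
  by (intro Ints_sum) (auto simp: Zlat_def)

lemma Y_sup: assumes "n \<ge> 1" "w \<in> Zlat" shows "real n *\<^sub>R w \<in> YQn 1 c n"
  unfolding YQn_def
proof (intro CollectI conjI ballI)
  show "real n *\<^sub>R w \<in> Zlat" using assms by (auto simp: Zlat_def)
  fix y' :: "real^'a" assume y': "y' \<in> Zlat"
  have "betaQ 1 c n (real n *\<^sub>R w) y' = w \<bullet> y' + of_int (1 + 2*c) * (\<Sum>i\<in>UNIV. w$i) * (\<Sum>i\<in>UNIV. y'$i)"
    using assms(1) unfolding beta_eq by (simp add: sum_distrib_left[symmetric] field_simps)
  also have "\<dots> \<in> \<int>" using assms(2) y'
    by (intro Ints_add Ints_mult Zlat_inner Zlat_sum) auto
  finally show "betaQ 1 c n (real n *\<^sub>R w) y' \<in> \<int>" .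
qed

lemma div_Ints: assumes "n \<ge> 1" shows "(real_of_int a / real n \<in> \<int>) \<longleftrightarrow> int n dvd a"
proof
  assume "real_of_int a / real n \<in> \<int>"
  then obtain m where "real_of_int a / real n = of_int m" by (auto elim: Ints_cases)
  then have "real_of_int a = real_of_int (int n * m)" using assms by (simp add: field_simps)
  then have "a = int n * m" by linarith
  then show "int n dvd a" by simp
next
  assume "int n dvd a"
  then obtain m where "a = int n * m" by auto
  then show "real_of_int a / real n \<in> \<int>" using assms by simp
qed

lemma Y_dvd: assumes "n \<ge> 1" "y \<in> YQn 1 c n"
  shows "int n dvd (\<lfloor>y$k\<rfloor> + (1+2*c) * (\<Sum>i\<in>UNIV. \<lfloor>y$i\<rfloor>))"
proof -
  have yZ: "y \<in> Zlat" and b: "betaQ 1 c n y (ev k) \<in> \<int>"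
    using assms(2) by (auto simp: YQn_def Zlat_def ev_comp)
  have fl: "\<And>i. y $ i = of_int \<lfloor>y$i\<rfloor>" using yZ by (auto simp: Zlat_def elim: Ints_cases)
  have "y \<bullet> ev k = y $ k" by (simp add: inner_vec_def ev_comp if_distrib sum.delta sum.delta' cong: if_cong)
  then have "betaQ 1 c n y (ev k) = real_of_int (\<lfloor>y$k\<rfloor> + (1+2*c) * (\<Sum>i\<in>UNIV. \<lfloor>y$i\<rfloor>)) / real n"
  proof -
    have sumeq: "(\<Sum>i\<in>UNIV. y$i) = (\<Sum>i\<in>UNIV. real_of_int \<lfloor>y$i\<rfloor>)"
      by (rule sum.cong) (auto intro: fl)
    have e3: "real_of_int (\<lfloor>y$k\<rfloor> + (1+2*c) * (\<Sum>i\<in>UNIV. \<lfloor>y$i\<rfloor>)) = real_of_int \<lfloor>y$k\<rfloor> + (1 + 2 * of_int c) * (\<Sum>i\<in>UNIV. real_of_int \<lfloor>y$i\<rfloor>)"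
      by simp
    have e4: "y$k + of_int (1 + 2*c) * (\<Sum>i\<in>UNIV. y$i) * 1 = real_of_int (\<lfloor>y$k\<rfloor> + (1+2*c) * (\<Sum>i\<in>UNIV. \<lfloor>y$i\<rfloor>))"
      unfolding e3 sumeq using fl[of k] by simp
    show ?thesis unfolding beta_eq sum_ev \<open>y \<bullet> ev k = y $ k\<close> e4 ..
  qed
  with b show ?thesis using div_Ints[OF assms(1)] by metis
qed

lemma Y_decomp: assumes "n \<ge> 1" "y \<in> YQn 1 c n"
  shows "\<exists>a z. z \<in> Zlat \<and> (\<forall>k. y$k = a + real n * z$k)"
proof -
  obtain k0 :: 'a where True by simp
  have yZ: "y \<in> Zlat" using assms(2) by (auto simp: YQn_def)
  have fl: "\<And>i. y $ i = of_int \<lfloor>y$i\<rfloor>" using yZ by (auto simp: Zlat_def elim: Ints_cases)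
  define z :: "real^'a" where "z = (\<chi> k. of_int ((\<lfloor>y$k\<rfloor> - \<lfloor>y$k0\<rfloor>) div int n))"
  have "z \<in> Zlat" by (simp add: z_def Zlat_def)
  moreover have "y$k = y$k0 + real n * z$k" for k
  proof -
    have "int n dvd (\<lfloor>y$k\<rfloor> + (1+2*c) * (\<Sum>i\<in>UNIV. \<lfloor>y$i\<rfloor>)) - (\<lfloor>y$k0\<rfloor> + (1+2*c) * (\<Sum>i\<in>UNIV. \<lfloor>y$i\<rfloor>))"
      using Y_dvd[OF assms] by (intro dvd_diff) auto
    then have d: "int n dvd (\<lfloor>y$k\<rfloor> - \<lfloor>y$k0\<rfloor>)" by simp
    have "\<lfloor>y$k\<rfloor> = \<lfloor>y$k0\<rfloor> + int n * ((\<lfloor>y$k\<rfloor> - \<lfloor>y$k0\<rfloor>) div int n)"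
      using d by simp
    then have "real_of_int \<lfloor>y$k\<rfloor> = real_of_int \<lfloor>y$k0\<rfloor> + real n * real_of_int ((\<lfloor>y$k\<rfloor> - \<lfloor>y$k0\<rfloor>) div int n)"
      by (metis of_int_add of_int_mult of_int_of_nat_eq)
    then show ?thesis unfolding z_def vec_lambda_beta using fl[of k] fl[of k0] by linarith
  qed
  ultimately show ?thesis by blast
qed

lemma Y_sub: fixes y :: "real^'a::finite" assumes "n \<ge> 1" "y \<in> YQn 1 c n"
  and g: "gcd (int n) (1 + int CARD('a) + 2 * int CARD('a) * c) = 1"
  shows "\<exists>w\<in>Zlat. y = real n *\<^sub>R (w :: real^'a::finite)"
proof -
  have yZ: "y \<in> Zlat" using assms(2) by (auto simp: YQn_def)
  have fl: "\<And>i. y $ i = of_int \<lfloor>y$i\<rfloor>" using yZ by (auto simp: Zlat_def elim: Ints_cases)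
  define S where "S = (\<Sum>i\<in>UNIV. \<lfloor>y$i\<rfloor>)"
  have dk: "\<And>k. int n dvd (\<lfloor>y$k\<rfloor> + (1+2*c) * S)" using Y_dvd[OF assms(1,2)] S_def by blast
  have "int n dvd (\<Sum>k\<in>UNIV. \<lfloor>y$k\<rfloor> + (1+2*c) * S)" by (intro dvd_sum dk)
  also have "(\<Sum>k\<in>UNIV. \<lfloor>y$k\<rfloor> + (1+2*c) * S) = S * (1 + int CARD('a) + 2 * int CARD('a) * c)"
    by (simp add: sum.distrib S_def algebra_simps)
  finally have "int n dvd S * (1 + int CARD('a) + 2 * int CARD('a) * c)" .
  moreover have "coprime (int n) (1 + int CARD('a) + 2 * int CARD('a) * c)"
    using g by (simp add: coprime_iff_gcd_eq_1)
  ultimately have dS: "int n dvd S" using coprime_dvd_mult_left_iff by blast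
  have dy: "int n dvd \<lfloor>y$k\<rfloor>" for k
  proof -
    have "int n dvd (\<lfloor>y$k\<rfloor> + (1+2*c) * S) - (1+2*c) * S" using dk dS by (intro dvd_diff) auto
    then show ?thesis by simp
  qed
  define w :: "real^'a" where "w = (\<chi> k. of_int (\<lfloor>y$k\<rfloor> div int n))"
  have "w \<in> Zlat" by (simp add: w_def Zlat_def)
  moreover have "y = real n *\<^sub>R w"
  proof (subst vec_eq_iff, intro allI)
    fix k
    have "\<lfloor>y$k\<rfloor> = int n * (\<lfloor>y$k\<rfloor> div int n)" using dy[of k] by simp
    then have "real_of_int \<lfloor>y$k\<rfloor> = real n * real_of_int (\<lfloor>y$k\<rfloor> div int n)"
      by (metis of_int_mult of_int_of_nat_eq)
    then show "y $ k = (real n *\<^sub>R w) $ k" unfolding w_def vector_scaleR_component vec_lambda_beta real_scaleR_def using fl[of k] by linarith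
  qed
  ultimately show ?thesis by blast
qed

lemma inner_decomp: assumes "\<forall>k. y$k = a + N * z$k" "(\<Sum>i\<in>UNIV. w$i) = 0"
  shows "y \<bullet> w = N * (z \<bullet> (w :: real^'a::finite))"
proof -
  have "y \<bullet> w = (\<Sum>i\<in>UNIV. a * w$i + N * (z$i * w$i))"
    unfolding inner_vec_def using assms(1) by (simp add: algebra_simps)
  also have "\<dots> = a * (\<Sum>i\<in>UNIV. w$i) + N * (z \<bullet> w)"
    unfolding inner_vec_def by (simp add: sum.distrib sum_distrib_left)
  finally show ?thesis using assms(2) by simp
qed

lemma span_H: assumes "\<forall>v\<in>S. (\<Sum>i\<in>UNIV. v$i) = 0" "w \<in> span S"
  shows "(\<Sum>i\<in>UNIV. (w :: real^'a::finite)$i) = 0"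
proof -
  have "subspace {w :: real^'a. (\<Sum>i\<in>UNIV. w$i) = 0}"
    by (auto simp: subspace_def sum.distrib sum_distrib_left[symmetric])
  then have "span S \<subseteq> {w :: real^'a. (\<Sum>i\<in>UNIV. w$i) = 0}"
    using assms(1) by (intro span_minimal) auto
  then show ?thesis using assms(2) by auto
qed

lemma span_scaled: assumes "(d::real) \<noteq> 0"
  shows "span {d *\<^sub>R f i j | i j. P i j} = span {f i j | i j. P i j}"
proof
  show "span {d *\<^sub>R f i j | i j. P i j} \<subseteq> span {f i j | i j. P i j}"
    by (intro span_minimal) (auto intro: span_mul span_base)
  have "f i j \<in> span {d *\<^sub>R f i j | i j. P i j}" if "P i j" for i j
  proof -
    have "(1/d) *\<^sub>R (d *\<^sub>R f i j) \<in> span {d *\<^sub>R f i j | i j. P i j}"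
      using that by (intro span_mul span_base) auto
    then show ?thesis using assms by simp
  qed
  then show "span {f i j | i j. P i j} \<subseteq> span {d *\<^sub>R f i j | i j. P i j}"
    by (intro span_minimal) auto
qed


lemma rd_iso_I:
  "linear f \<Longrightarrow> linear g \<Longrightarrow> bij f \<Longrightarrow> bij g \<Longrightarrow> (\<forall>x y. f x \<bullet> g y = x \<bullet> y) \<Longrightarrow>
   f ` X = X' \<Longrightarrow> g ` Y = Y' \<Longrightarrow> (\<lambda>(a, b). (f a, g b)) ` R = R' \<Longrightarrow> rd_iso (X, Y, R) (X', Y', R')"
  unfolding rd_iso_def by auto

lemma rd_isog_I:
  "linear f \<Longrightarrow> linear g \<Longrightarrow> bij f \<Longrightarrow> bij g \<Longrightarrow> (\<forall>x y. f x \<bullet> g y = x \<bullet> y) \<Longrightarrow>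
   X' \<subseteq> f ` X \<Longrightarrow> g ` Y \<subseteq> Y' \<Longrightarrow> (\<lambda>(a, b). (f a, g b)) ` R = R' \<Longrightarrow> rd_isogeny (X, Y, R) (X', Y', R')"
  unfolding rd_isogeny_def by auto

lemma scale_facts: assumes "(N::real) \<noteq> 0"
  shows "linear (\<lambda>x::real^'a. (1/N) *\<^sub>R x)" "linear (\<lambda>x::real^'a. N *\<^sub>R x)"
    "bij (\<lambda>x::real^'a. (1/N) *\<^sub>R x)" "bij (\<lambda>x::real^'a. N *\<^sub>R x)"
    "\<forall>x y::real^'a. ((1/N) *\<^sub>R x) \<bullet> (N *\<^sub>R y) = x \<bullet> y"
proof -
  show "linear (\<lambda>x::real^'a. (1/N) *\<^sub>R x)" "linear (\<lambda>x::real^'a. N *\<^sub>R x)"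
    by (auto intro!: linearI simp: algebra_simps)
  show "bij (\<lambda>x::real^'a. (1/N) *\<^sub>R x)"
    by (rule o_bij[of "\<lambda>x. N *\<^sub>R x"]) (use assms in \<open>auto simp: fun_eq_iff\<close>)
  show "bij (\<lambda>x::real^'a. N *\<^sub>R x)"
    by (rule o_bij[of "\<lambda>x. (1/N) *\<^sub>R x"]) (use assms in \<open>auto simp: fun_eq_iff\<close>)
  show "\<forall>x y::real^'a. ((1/N) *\<^sub>R x) \<bullet> (N *\<^sub>R y) = x \<bullet> y" using assms by simp
qed

lemma Rd_eq: assumes "n \<ge> 1"
  shows "{(real_of_int (nphi 1 c n i j) *\<^sub>R (ev i - ev j), (1 / real_of_int (nphi 1 c n i j)) *\<^sub>R (ev i - ev j)) | i j. i \<noteq> j}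
       = {(real n *\<^sub>R (ev i - ev j :: real^'a::finite), (1 / real n) *\<^sub>R (ev i - ev j)) | i j. i \<noteq> j}"
  using nphi_eq[of _ _ c n] by force

lemma roots_img: assumes "n \<ge> 1"
  shows "(\<lambda>(a, b). ((1/real n) *\<^sub>R a, real n *\<^sub>R b)) `
     {(real n *\<^sub>R (ev i - ev j :: real^'a::finite), (1 / real n) *\<^sub>R (ev i - ev j)) | i j. i \<noteq> j}
   = {(ev i - ev j, ev i - ev j) | i j. i \<noteq> j}"
proof (intro equalityI subsetI)
  fix p assume "p \<in> {(ev i - ev j :: real^'a, ev i - ev j) | i j. i \<noteq> j}"
  then obtain i j where p: "p = (ev i - ev j, ev i - ev j)" "i \<noteq> j" by blast
  have "p = (\<lambda>(a, b). ((1/real n) *\<^sub>R a, real n *\<^sub>R b)) (real n *\<^sub>R (ev i - ev j), (1 / real n) *\<^sub>R (ev i - ev j))"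
    using assms p by simp
  then show "p \<in> (\<lambda>(a, b). ((1/real n) *\<^sub>R a, real n *\<^sub>R b)) `
     {(real n *\<^sub>R (ev i - ev j :: real^'a::finite), (1 / real n) *\<^sub>R (ev i - ev j)) | i j. i \<noteq> j}"
    using p(2) by blast
qed (use assms in \<open>auto; blast\<close>)

lemma snd_Rd: "snd ` {(real n *\<^sub>R (ev i - ev j :: real^'a::finite), (1 / real n) *\<^sub>R (ev i - ev j)) | i j. i \<noteq> j}
   = {(1 / real n) *\<^sub>R (ev i - ev j) | i j. i \<noteq> j}"
  by force

lemma snd_Rg: "snd ` {(ev i - ev j :: real^'a::finite, ev i - ev j) | i j. i \<noteq> j}
   = {(ev i - ev j) | i j. i \<noteq> j}"
  by force

lemma V_sum0: "w \<in> span {(ev i - ev j :: real^'a::finite) | i j. i \<noteq> j} \<Longrightarrow> (\<Sum>k\<in>UNIV. w$k) = 0"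
  by (rule span_H) (auto simp: sum_subtractf sum_ev)


theorem mainTheorem5:
  fixes n :: nat and c :: int
  assumes "n \<ge> 1"
  shows "(gcd (int n) (1 + int CARD('n) + 2 * int CARD('n) * c) = 1 \<longrightarrow>
            rd_iso (dual_datum 1 c n :: ('n::finite) rdatum) gl_datum)
       \<and> (gcd n CARD('n) = 1 \<longrightarrow>
            rd_iso (rd_derived (dual_datum 1 c n :: 'n rdatum)) sl_datum
            \<and> rd_isogeny (dual_datum 1 c n :: 'n rdatum) gl_datum)"
proof -
  have n0: "real n \<noteq> 0" using assms by simp
  note sf = scale_facts[OF n0, where 'a='n]
  define RD where "RD = {(real n *\<^sub>R (ev i - ev j :: real^'n), (1 / real n) *\<^sub>R (ev i - ev j)) | i j. i \<noteq> j}"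
  define RG where "RG = {(ev i - ev j :: real^'n, ev i - ev j) | i j. i \<noteq> j}"
  define V where "V = span {(ev i - ev j :: real^'n) | i j. i \<noteq> j}"
  have dd: "(dual_datum 1 c n :: 'n rdatum) = (YQn 1 c n, XQn 1 c n, RD)"
    unfolding dual_datum_def RD_def using Rd_eq[OF assms, of c] by simp
  have gd: "(gl_datum :: 'n rdatum) = (Zlat, Zlat, RG)" unfolding gl_datum_def RG_def ..
  have R: "(\<lambda>(a, b). ((1/real n) *\<^sub>R a, real n *\<^sub>R b)) ` RD = RG"
    unfolding RD_def RG_def by (rule roots_img[OF assms])
  have VD: "span (snd ` RD) = V"
    unfolding RD_def V_def snd_Rd by (rule span_scaled) (use n0 in simp)
  have VG: "span (snd ` RG) = V" unfolding RG_def V_def snd_Rg ..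
  have V0: "\<And>w. w \<in> V \<Longrightarrow> (\<Sum>k\<in>UNIV. w$k) = 0" unfolding V_def by (rule V_sum0)
  have Vs: "\<And>w a. w \<in> V \<Longrightarrow> a *\<^sub>R w \<in> V" unfolding V_def by (rule span_mul)
  have XZ: "\<And>x. x \<in> XQn 1 c n \<Longrightarrow> real n *\<^sub>R x \<in> Zlat" by (auto simp: XQn_def Zlat_def)
  have part1: "rd_iso (dual_datum 1 c n :: 'n rdatum) gl_datum"
    if g: "gcd (int n) (1 + int CARD('n) + 2 * int CARD('n) * c) = 1"
    unfolding dd gd
  proof (rule rd_iso_I[OF sf _ _ R])
    show "(\<lambda>x. (1/real n) *\<^sub>R x) ` (YQn 1 c n :: (real^'n) set) = Zlat"
    proof (intro equalityI subsetI)
      fix z :: "real^'n" assume "z \<in> (\<lambda>x. (1/real n) *\<^sub>R x) ` (YQn 1 c n :: (real^'n) set)"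
      then obtain y where y: "y \<in> YQn 1 c n" "z = (1/real n) *\<^sub>R y" by blast
      obtain w where "w \<in> Zlat" "y = real n *\<^sub>R w" using Y_sub[OF assms y(1) g] by blast
      then show "z \<in> Zlat" using y n0 by simp
    next
      fix z :: "real^'n" assume z: "z \<in> Zlat"
      have "z = (1/real n) *\<^sub>R (real n *\<^sub>R z)" using n0 by simp
      then show "z \<in> (\<lambda>x. (1/real n) *\<^sub>R x) ` (YQn 1 c n :: (real^'n) set)" using Y_sup[OF assms z] by blast
    qed
    show "(\<lambda>x. real n *\<^sub>R x) ` (XQn 1 c n :: (real^'n) set) = Zlat"
    proof (intro equalityI subsetI)
      fix z :: "real^'n" assume "z \<in> (\<lambda>x. real n *\<^sub>R x) ` (XQn 1 c n :: (real^'n) set)"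
      then show "z \<in> Zlat" using XZ by blast
    next
      fix z :: "real^'n" assume z: "z \<in> Zlat"
      have "(1/real n) *\<^sub>R z \<in> XQn 1 c n"
        unfolding XQn_def
      proof (intro CollectI conjI allI ballI)
        fix i show "real n * ((1/real n) *\<^sub>R z) $ i \<in> \<int>" using z n0 by (simp add: Zlat_def)
      next
        fix y :: "real^'n" assume "y \<in> YQn 1 c n"
        then obtain w where w: "w \<in> Zlat" "y = real n *\<^sub>R w" using Y_sub[OF assms _ g] by blast
        have "((1/real n) *\<^sub>R z) \<bullet> y = z \<bullet> w" using w n0 by simp
        then show "((1/real n) *\<^sub>R z) \<bullet> y \<in> \<int>" using Zlat_inner[OF z w(1)] by simp
      qed
      moreover have "z = real n *\<^sub>R ((1/real n) *\<^sub>R z)" using n0 by simp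
      ultimately show "z \<in> (\<lambda>x. real n *\<^sub>R x) ` (XQn 1 c n :: (real^'n) set)" by blast
    qed
  qed
  have part2: "rd_iso (rd_derived (dual_datum 1 c n :: 'n rdatum)) sl_datum"
    unfolding sl_datum_def dd gd rd_derived_def prod.case Let_def VD VG
  proof (rule rd_iso_I[OF sf _ _ R])
    show "(\<lambda>x. (1/real n) *\<^sub>R x) ` {v \<in> V. \<exists>x\<in>(YQn 1 c n :: (real^'n) set). \<forall>w\<in>V. v \<bullet> w = x \<bullet> w}
        = {v \<in> V. \<exists>x\<in>Zlat. \<forall>w\<in>V. v \<bullet> w = x \<bullet> w}"
    proof (intro equalityI subsetI)
      fix u :: "real^'n" assume "u \<in> (\<lambda>x. (1/real n) *\<^sub>R x) ` {v \<in> V. \<exists>x\<in>(YQn 1 c n :: (real^'n) set). \<forall>w\<in>V. v \<bullet> w = x \<bullet> w}"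
      then obtain v x where v: "u = (1/real n) *\<^sub>R v" "v \<in> V" "x \<in> YQn 1 c n" "\<forall>w\<in>V. v \<bullet> w = x \<bullet> w"
        by blast
      obtain a z where az: "z \<in> Zlat" "\<forall>k. x$k = a + real n * z$k" using Y_decomp[OF assms v(3)] by blast
      have "\<forall>w\<in>V. u \<bullet> w = z \<bullet> w"
      proof
        fix w assume "w \<in> V"
        then have "x \<bullet> w = real n * (z \<bullet> w)" using inner_decomp[OF az(2) V0] by blast
        then show "u \<bullet> w = z \<bullet> w" using v(1,4) \<open>w \<in> V\<close> n0 by simp
      qed
      then show "u \<in> {v \<in> V. \<exists>x\<in>Zlat. \<forall>w\<in>V. v \<bullet> w = x \<bullet> w}" using v(1,2) Vs az(1) by blast
    next
      fix u :: "real^'n" assume "u \<in> {v \<in> V. \<exists>x\<in>Zlat. \<forall>w\<in>V. v \<bullet> w = x \<bullet> w}"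
      then obtain z where u: "u \<in> V" "z \<in> Zlat" "\<forall>w\<in>V. u \<bullet> w = z \<bullet> w" by blast
      have "real n *\<^sub>R u \<in> {v \<in> V. \<exists>x\<in>(YQn 1 c n :: (real^'n) set). \<forall>w\<in>V. v \<bullet> w = x \<bullet> w}"
        using u Vs Y_sup[OF assms u(2), of c] by (auto intro!: bexI[of _ "real n *\<^sub>R z"])
      moreover have "u = (1/real n) *\<^sub>R (real n *\<^sub>R u)" using n0 by simp
      ultimately show "u \<in> (\<lambda>x. (1/real n) *\<^sub>R x) ` {v \<in> V. \<exists>x\<in>(YQn 1 c n :: (real^'n) set). \<forall>w\<in>V. v \<bullet> w = x \<bullet> w}"
        by blast
    qed
    show "(\<lambda>x. real n *\<^sub>R x) ` ((XQn 1 c n :: (real^'n) set) \<inter> V) = Zlat \<inter> V"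
    proof (intro equalityI subsetI)
      fix z :: "real^'n" assume "z \<in> (\<lambda>x. real n *\<^sub>R x) ` ((XQn 1 c n :: (real^'n) set) \<inter> V)"
      then show "z \<in> Zlat \<inter> V" using XZ Vs by blast
    next
      fix z :: "real^'n" assume z: "z \<in> Zlat \<inter> V"
      have "(1/real n) *\<^sub>R z \<in> XQn 1 c n"
        unfolding XQn_def
      proof (intro CollectI conjI allI ballI)
        fix i show "real n * ((1/real n) *\<^sub>R z) $ i \<in> \<int>" using z n0 by (simp add: Zlat_def)
      next
        fix y :: "real^'n" assume "y \<in> YQn 1 c n"
        then obtain a w where w: "w \<in> Zlat" "\<forall>k. y$k = a + real n * w$k" using Y_decomp[OF assms] by blast
        have "y \<bullet> z = real n * (w \<bullet> z)" using inner_decomp[OF w(2) V0] z by blast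
        then have "((1/real n) *\<^sub>R z) \<bullet> y = w \<bullet> z" using n0 by (simp add: inner_commute)
        then show "((1/real n) *\<^sub>R z) \<bullet> y \<in> \<int>" using Zlat_inner[OF w(1)] z by simp
      qed
      moreover have "z = real n *\<^sub>R ((1/real n) *\<^sub>R z)" using n0 by simp
      ultimately show "z \<in> (\<lambda>x. real n *\<^sub>R x) ` ((XQn 1 c n :: (real^'n) set) \<inter> V)" using z Vs by blast
    qed
  qed
  have part3: "rd_isogeny (dual_datum 1 c n :: 'n rdatum) gl_datum"
    unfolding dd gd
  proof (rule rd_isog_I[OF sf _ _ R])
    show "Zlat \<subseteq> (\<lambda>x. (1/real n) *\<^sub>R x) ` (YQn 1 c n :: (real^'n) set)"
    proof
      fix z :: "real^'n" assume z: "z \<in> Zlat"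
      have "z = (1/real n) *\<^sub>R (real n *\<^sub>R z)" using n0 by simp
      then show "z \<in> (\<lambda>x. (1/real n) *\<^sub>R x) ` (YQn 1 c n :: (real^'n) set)" using Y_sup[OF assms z] by blast
    qed
    show "(\<lambda>x. real n *\<^sub>R x) ` (XQn 1 c n :: (real^'n) set) \<subseteq> Zlat" using XZ by blast
  qed
  show ?thesis using part1 part2 part3 by blast
qed

end
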